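(* Let $q\in\mathbb{C}^*$, $\lambda\in\mathbb{C}^*$ and $a,b\in\mathbb{C}$. Regard $\Omega_{\mathcal{R}}(\lambda,a,b)$ as an $\mathcal{L}$-module via the injective homomorphism $\tau:\mathcal{L}\to\mathcal{R}$. Then $\Omega_{\mathcal{R}}(\lambda,a,b)$ is a simple $\mathcal{L}$-module if and only if it is a simple $\mathcal{R}$-module.
   Context: Let $\mathbb{Z}_+=\{0,1,2,\dots\}$. For $s\in\{0,\frac12\}$ let $S(q)$ be the Lie superalgebra over $\mathbb{C}$ with even basis $\{L_{m,i}\mid m\in\mathbb{Z},i\in\mathbb{Z}_+\}$, odd basis $\{G_{l,j}\mid l\in s+\mathbb{Z},j\in\mathbb{Z}_+\}$ and brackets $[L_{m,i},L_{n,j}]=(n(i+q)-m(j+q))L_{m+n,i+j}$, $[L_{m,i},G_{l,j}]=(l(i+q)-m(j+\frac{q}{2}))G_{m+l,i+j}$, $[G_{l,i},G_{r,j}]=2qL_{l+r,i+j}$. For $s=0$ this is the Ramond-Block algebra $\mathcal{R}$, for $s=\frac12$ the Neveu-Schwarz-Block algebra $\mathcal{L}$ (same $q$). The map $\tau:\mathcal{L}\to\mathcal{R}$ is the linear map with $\tau(L_{m,i})=\frac12L_{2m,i}$, $\tau(G_{r,j})=\frac{1}{\sqrt2}G_{2r,j}$ ($m\in\mathbb{Z}$, $r\in\frac12+\mathbb{Z}$); it is an injective Lie superalgebra homomorphism. Modules are supermodules. For $\lambda\in\mathbb{C}^*$, $a,b\in\mathbb{C}$, $\Omega_{\mathcal{R}}(\lambda,a,b)=\mathbb{C}[t^2]\oplus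 t\mathbb{C}[t^2]$ (even part $\mathbb{C}[t^2]$, odd part $t\mathbb{C}[t^2]$) is the $\mathcal{R}$-module with, for $f\in\mathbb{C}[t^2]$, $m\in\mathbb{Z}$, $i\in\mathbb{Z}_+$: $L_{m,i}f(t^2)=\lambda^m(\delta_{i,0}(t^2-mqa)+\delta_{q,-1}\delta_{i,1}b)f(t^2-mq)$, $L_{m,i}tf(t^2)=\lambda^m t(\delta_{i,0}(t^2-mqa-\frac{mq}{2})+\delta_{q,-1}\delta_{i,1}b)f(t^2-mq)$, $G_{m,i}f(t^2)=\lambda^m\delta_{i,0}tf(t^2-mq)$, $G_{m,i}tf(t^2)=q\lambda^m(\delta_{i,0}(t^2-2mqa)+2\delta_{q,-1}\delta_{i,1}b)f(t^2-mq)$. *)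

theory Defs
  imports Complex_Main "HOL-Computational_Algebra.Polynomial"
begin

text \<open>The module Omega_R(lambda,a,b) = C[t^2] (+) t C[t^2] is modelled as pairs (f,g) of
complex polynomials in x = t^2, the pair (f,g) standing for f(t^2) + t g(t^2);
f is the even component, g the odd one.\<close>

type_synonym omega_vec = "complex poly \<times> complex poly"

definition shiftp :: "complex \<Rightarrow> complex poly \<Rightarrow> complex poly" where
  "shiftp c f = pcompose f [:- c, 1:]"

definition kd :: "'a \<Rightarrow> 'a \<Rightarrow> complex" where
  "kd x y = (if x = y then 1 else 0)"

definition omegaL :: "complex \<Rightarrow> complex \<Rightarrow> complex \<Rightarrow> complex \<Rightarrow> int \<Rightarrow> nat
                      \<Rightarrow> omega_vec \<Rightarrow> omega_vec" where
  "omegaL q lam a b m i v =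
     (smult (lam powi m) ([: kd i 0 * (- of_int m * q * a) + kd q (-1) * kd i 1 * b, kd i 0 :]
                            * shiftp (of_int m * q) (fst v)),
      smult (lam powi m) ([: kd i 0 * (- of_int m * q * a - of_int m * q / 2)
                              + kd q (-1) * kd i 1 * b, kd i 0 :]
                            * shiftp (of_int m * q) (snd v)))"

definition omegaG :: "complex \<Rightarrow> complex \<Rightarrow> complex \<Rightarrow> complex \<Rightarrow> int \<Rightarrow> nat
                      \<Rightarrow> omega_vec \<Rightarrow> omega_vec" where
  "omegaG q lam a b m i v =
     (smult (q * lam powi m) ([: kd i 0 * (- 2 * of_int m * q * a) + 2 * kd q (-1) * kd i 1 * b,
                                 kd i 0 :] * shiftp (of_int m * q) (snd v)),
      smult (lam powi m * kd i 0) (shiftp (of_int m * q) (fst v)))"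

text \<open>Sub-supermodules: Z2-graded complex subspaces stable under a family of operators.\<close>
definition graded_subspace :: "omega_vec set \<Rightarrow> bool" where
  "graded_subspace W \<longleftrightarrow> (0, 0) \<in> W
     \<and> (\<forall>v\<in>W. \<forall>w\<in>W. (fst v + fst w, snd v + snd w) \<in> W)
     \<and> (\<forall>c. \<forall>v\<in>W. (smult c (fst v), smult c (snd v)) \<in> W)
     \<and> (\<forall>v\<in>W. (fst v, 0) \<in> W \<and> (0, snd v) \<in> W)"

definition simple_for :: "(omega_vec \<Rightarrow> omega_vec) set \<Rightarrow> bool" where
  "simple_for Ops \<longleftrightarrow> (\<forall>W. graded_subspace W \<and> (\<forall>T\<in>Ops. T ` W \<subseteq> W)
                         \<longrightarrow> W = {(0, 0)} \<or> W = UNIV)"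

definition R_ops :: "complex \<Rightarrow> complex \<Rightarrow> complex \<Rightarrow> complex \<Rightarrow> (omega_vec \<Rightarrow> omega_vec) set" where
  "R_ops q lam a b = {omegaL q lam a b m i | m i. True} \<union> {omegaG q lam a b m i | m i. True}"

definition scale_vec :: "complex \<Rightarrow> omega_vec \<Rightarrow> omega_vec" where
  "scale_vec c v = (smult c (fst v), smult c (snd v))"

text \<open>Operators of the basis of the Neveu-Schwarz-Block algebra L acting via tau:
  L_{m,i} acts as (1/2) L_{2m,i}, and G_{r,j} (r = k + 1/2) acts as (1/sqrt 2) G_{2r,j} = G_{2k+1,j}.\<close>
definition L_ops :: "complex \<Rightarrow> complex \<Rightarrow> complex \<Rightarrow> complex \<Rightarrow> (omega_vec \<Rightarrow> omega_vec) set" where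
  "L_ops q lam a b =
     {scale_vec (1/2) \<circ> omegaL q lam a b (2 * m) i | m i. True}
     \<union> {scale_vec (1 / complex_of_real (sqrt 2)) \<circ> omegaG q lam a b (2 * k + 1) j | k j. True}"

end

theory Submission
  imports Defs "HOL-Library.Product_Plus"
begin

definition lag :: "complex set \<Rightarrow> complex \<Rightarrow> complex \<Rightarrow> complex" where
  "lag S s z = (\<Prod>t\<in>S-{s}. (z - t) / (s - t))"

lemma lagrange:
  fixes p :: "complex poly"
  assumes fin: "finite S" and deg: "degree p < card S"
  shows "poly p z = (\<Sum>s\<in>S. lag S s z * poly p s)"
proof -
  define L where "L = (\<Sum>s\<in>S. smult (poly p s) (\<Prod>t\<in>S-{s}. smult (1/(s-t)) [:-t,1:]))"
  have polyL: "poly L z = (\<Sum>s\<in>S. lag S s z * poly p s)" for z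
    unfolding L_def lag_def by (simp add: poly_sum poly_prod mult.commute diff_divide_distrib)
  have dprod: "degree (\<Prod>t\<in>S-{s}. smult (1/(s-t)) [:-t,1:]) \<le> card S - 1" if "s \<in> S" for s
  proof -
    have "degree (\<Prod>t\<in>S-{s}. smult (1/(s-t)) [:-t,1:]) \<le> (\<Sum>t\<in>S-{s}. degree (smult (1/(s-t)) [:-t,1:]))"
      using degree_prod_sum_le[of "S-{s}" "\<lambda>t. smult (1/(s-t)) [:-t,1:]"] fin by (simp add: o_def)
    also have "\<dots> \<le> (\<Sum>t\<in>S-{s}. 1)"
      by (intro sum_mono) (simp add: degree_smult_le)
    also have "\<dots> = card S - 1" using fin that by simp
    finally show ?thesis .
  qed
  have "degree L \<le> card S - 1"
    unfolding L_def
    proof (rule degree_sum_le[OF fin])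
    fix s assume "s \<in> S"
    show "degree (smult (poly p s) (\<Prod>t\<in>S-{s}. smult (1/(s-t)) [:-t,1:])) \<le> card S - 1"
      by (rule order.trans[OF degree_smult_le dprod[OF \<open>s \<in> S\<close>]])
  qed
  hence dL: "degree L < card S" using deg by linarith
  have "L = p"
  proof (rule poly_eqI_degree[of S])
    fix x assume x: "x \<in> S"
    have "poly L x = (\<Sum>s\<in>S. lag S s x * poly p s)" by (rule polyL)
    also have "\<dots> = lag S x x * poly p x + (\<Sum>s\<in>S-{x}. lag S s x * poly p s)"
      using fin x by (simp add: sum.remove)
    also have "(\<Sum>s\<in>S-{x}. lag S s x * poly p s) = 0"
    proof (rule sum.neutral, rule ballI)
      fix s assume s: "s \<in> S - {x}"
      have "lag S s x = 0" unfolding lag_def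
        using fin s x by (auto intro!: prod_zero)
      thus "lag S s x * poly p s = 0" by simp
    qed
    also have "lag S x x = 1" unfolding lag_def by (rule prod.neutral) auto
    finally show "poly L x = poly p x" by simp
  qed (use dL deg in auto)
  thus ?thesis using polyL[of z] by (simp only:)
qed

definition cpoly :: "nat \<Rightarrow> (int \<Rightarrow> complex poly) \<Rightarrow> bool" where
  "cpoly N F \<longleftrightarrow> (\<forall>j. \<exists>p. degree p \<le> N \<and> (\<forall>m. coeff (F m) j = poly p (of_int m)))"

lemma cpoly_mono: "cpoly N F \<Longrightarrow> N \<le> M \<Longrightarrow> cpoly M F"
  unfolding cpoly_def by (meson order.trans)

lemma cpoly_const: "cpoly 0 (\<lambda>m. g)"
  unfolding cpoly_def by (intro allI exI[of _ "[:coeff g _:]"]) simp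

lemma cpoly_add: "cpoly N F \<Longrightarrow> cpoly N G \<Longrightarrow> cpoly N (\<lambda>m. F m + G m)"
  unfolding cpoly_def
proof (intro allI)
  fix j assume F: "\<forall>j. \<exists>p. degree p \<le> N \<and> (\<forall>m. coeff (F m) j = poly p (of_int m))"
    and G: "\<forall>j. \<exists>p. degree p \<le> N \<and> (\<forall>m. coeff (G m) j = poly p (of_int m))"
  obtain p1 where p1: "degree p1 \<le> N" "\<forall>m. coeff (F m) j = poly p1 (of_int m)" using F by blast
  obtain p2 where p2: "degree p2 \<le> N" "\<forall>m. coeff (G m) j = poly p2 (of_int m)" using G by blast
  show "\<exists>p. degree p \<le> N \<and> (\<forall>m. coeff (F m + G m) j = poly p (of_int m))"
    using p1 p2 by (intro exI[of _ "p1 + p2"]) (auto intro: degree_add_le)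
qed

lemma cpoly_smult: "cpoly N F \<Longrightarrow> cpoly N (\<lambda>m. smult c (F m))"
  unfolding cpoly_def
proof (intro allI)
  fix j assume F: "\<forall>j. \<exists>p. degree p \<le> N \<and> (\<forall>m. coeff (F m) j = poly p (of_int m))"
  obtain p1 where p1: "degree p1 \<le> N" "\<forall>m. coeff (F m) j = poly p1 (of_int m)" using F by blast
  show "\<exists>p. degree p \<le> N \<and> (\<forall>m. coeff (smult c (F m)) j = poly p (of_int m))"
    using p1 by (intro exI[of _ "smult c p1"]) (auto intro: order.trans[OF degree_smult_le])
qed

lemma cpoly_lin:
  assumes "cpoly N F"
  shows "cpoly (Suc N) (\<lambda>m. [:\<alpha> + \<beta> * of_int m, d:] * F m)"
  unfolding cpoly_def
proof (intro allI)
  fix j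
  from assms obtain P where P: "\<And>j. degree (P j) \<le> N" "\<And>j m. coeff (F m) j = poly (P j) (of_int m)"
    unfolding cpoly_def by metis
  have e: "coeff ([:\<alpha> + \<beta> * of_int m, d:] * F m) j
      = (\<alpha> + \<beta> * of_int m) * coeff (F m) j + (if j = 0 then 0 else d * coeff (F m) (j - 1))" for m
    by (cases j) (simp_all add: mult_pCons_left)
  show "\<exists>p. degree p \<le> Suc N \<and> (\<forall>m. coeff ([:\<alpha> + \<beta> * of_int m, d:] * F m) j = poly p (of_int m))"
  proof (intro exI[of _ "[:\<alpha>, \<beta>:] * P j + (if j = 0 then 0 else smult d (P (j - 1)))"] conjI allI)
    have "degree ([:\<alpha>, \<beta>:] * P j) \<le> Suc N"
      using degree_mult_le[of "[:\<alpha>, \<beta>:]" "P j"] P(1)[of j] by (auto split: if_splits)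
    moreover have "degree (if j = 0 then 0 else smult d (P (j - 1))) \<le> Suc N"
      using P(1)[of "j-1"] degree_smult_le[of d "P (j-1)"] by auto
    ultimately show "degree ([:\<alpha>, \<beta>:] * P j + (if j = 0 then 0 else smult d (P (j - 1)))) \<le> Suc N"
      by (meson degree_add_le)
  next
    fix m show "coeff ([:\<alpha> + \<beta> * of_int m, d:] * F m) j = poly ([:\<alpha>, \<beta>:] * P j + (if j = 0 then 0 else smult d (P (j - 1)))) (of_int m)"
      unfolding e by (simp add: P(2) algebra_simps)
  qed
qed

lemma cpoly_shift: "\<exists>N. cpoly N (\<lambda>m. shiftp (of_int m * q) f)"
proof (induction f rule: pCons_induct)
  case 0
  then show ?case using cpoly_const[of 0] by (auto simp: shiftp_def)
next
  case (pCons a f)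
  then obtain N where N: "cpoly N (\<lambda>m. shiftp (of_int m * q) f)" by blast
  have "cpoly (Suc N) (\<lambda>m. [:0 + (-q) * of_int m, 1:] * shiftp (of_int m * q) f)"
    by (rule cpoly_lin[OF N])
  hence "cpoly (Suc N) (\<lambda>m. [:a:] + [:0 + (-q) * of_int m, 1:] * shiftp (of_int m * q) f)"
    using cpoly_add[OF cpoly_mono[OF cpoly_const, of "Suc N"]] by auto
  moreover have "shiftp (of_int m * q) (pCons a f) = [:a:] + [:0 + (-q) * of_int m, 1:] * shiftp (of_int m * q) f" for m
    by (simp add: shiftp_def pcompose_pCons mult.commute)
  ultimately show ?case by auto
qed

definition vpoly :: "nat \<Rightarrow> (int \<Rightarrow> omega_vec) \<Rightarrow> bool" where
  "vpoly N P \<longleftrightarrow> cpoly N (\<lambda>m. fst (P m)) \<and> cpoly N (\<lambda>m. snd (P m))"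

lemma gs_scale: "graded_subspace W \<Longrightarrow> v \<in> W \<Longrightarrow> scale_vec c v \<in> W"
  unfolding graded_subspace_def scale_vec_def by blast

lemma gs_sum: assumes "graded_subspace W" "finite B" "\<And>s. s \<in> B \<Longrightarrow> u s \<in> W"
  shows "(\<Sum>s\<in>B. u s) \<in> W"
  using assms(2,3)
proof (induction B rule: finite_induct)
  case empty
  then show ?case using assms(1) by (simp add: graded_subspace_def zero_prod_def)
next
  case (insert x F)
  then have "u x \<in> W" "(\<Sum>s\<in>F. u s) \<in> W" by auto
  then have "(fst (u x) + fst (\<Sum>s\<in>F. u s), snd (u x) + snd (\<Sum>s\<in>F. u s)) \<in> W"
    using assms(1) unfolding graded_subspace_def by blast
  moreover have "(\<Sum>s\<in>insert x F. u s) = (fst (u x) + fst (\<Sum>s\<in>F. u s), snd (u x) + snd (\<Sum>s\<in>F. u s))"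
    using insert by (simp add: prod_eq_iff)
  ultimately show ?case by simp
qed

lemma cpoly_interp:
  assumes "cpoly N F" "finite B" "card B = Suc N"
  shows "F m = (\<Sum>s\<in>B. smult (lag (of_int ` B) (of_int s) (of_int m)) (F s))"
proof (rule poly_eqI)
  fix j
  from assms(1) obtain p where p: "degree p \<le> N" "\<And>m. coeff (F m) j = poly p (of_int m)"
    unfolding cpoly_def by blast
  have inj: "inj_on (of_int :: int \<Rightarrow> complex) B" by (auto simp: inj_on_def)
  have cS: "card (of_int ` B :: complex set) = Suc N" using card_image[OF inj] assms(3) by simp
  have "coeff (F m) j = poly p (of_int m)" by (rule p(2))
  also have "\<dots> = (\<Sum>s\<in>of_int ` B. lag (of_int ` B) s (of_int m) * poly p s)"
    by (rule lagrange) (use assms(2) cS p(1) in auto)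
  also have "\<dots> = (\<Sum>s\<in>B. lag (of_int ` B) (of_int s) (of_int m) * poly p (of_int s))"
    by (simp add: sum.reindex[OF inj])
  also have "\<dots> = coeff (\<Sum>s\<in>B. smult (lag (of_int ` B) (of_int s) (of_int m)) (F s)) j"
    by (simp add: coeff_sum p(2))
  finally show "coeff (F m) j = coeff (\<Sum>s\<in>B. smult (lag (of_int ` B) (of_int s) (of_int m)) (F s)) j" .
qed

lemma extend:
  assumes W: "graded_subspace W" and P: "vpoly N P" and A: "infinite A" and PA: "\<And>m. m \<in> A \<Longrightarrow> P m \<in> W"
  shows "P m \<in> W"
proof -
  obtain B where B: "finite B" "card B = Suc N" "B \<subseteq> A" using infinite_arbitrarily_large[OF A] by blast
  have "P m = (\<Sum>s\<in>B. scale_vec (lag (of_int ` B) (of_int s) (of_int m)) (P s))"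
    using cpoly_interp[OF P[unfolded vpoly_def, THEN conjunct1] B(1,2), of m]
      cpoly_interp[OF P[unfolded vpoly_def, THEN conjunct2] B(1,2), of m]
    by (simp add: prod_eq_iff scale_vec_def fst_sum snd_sum)
  also have "\<dots> \<in> W"
    using B PA by (intro gs_sum[OF W B(1)] gs_scale[OF W]) auto
  finally show ?thesis .
qed

lemma scale_vec_cancel: "(c::complex) \<noteq> 0 \<Longrightarrow> scale_vec (inverse c) (scale_vec c u) = u"
  by (simp add: scale_vec_def)

lemma omegaL_scale: "omegaL q lam a b m i v = scale_vec (lam powi m) (omegaL q 1 a b m i v)"
  by (simp add: omegaL_def scale_vec_def)

lemma omegaG_scale: "omegaG q lam a b m i v = scale_vec (lam powi m) (omegaG q 1 a b m i v)"
  by (simp add: omegaG_def scale_vec_def mult.commute)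

lemma vpoly_omegaL: "\<exists>N. vpoly N (\<lambda>m. omegaL q 1 a b m i v)"
proof -
  obtain N1 where N1: "cpoly N1 (\<lambda>m. shiftp (of_int m * q) (fst v))" using cpoly_shift by blast
  obtain N2 where N2: "cpoly N2 (\<lambda>m. shiftp (of_int m * q) (snd v))" using cpoly_shift by blast
  let ?N = "max N1 N2"
  have c1: "cpoly (Suc ?N) (\<lambda>m. [:kd q (-1) * kd i 1 * b + (- (kd i 0 * q * a)) * of_int m, kd i 0:] * shiftp (of_int m * q) (fst v))"
    by (rule cpoly_lin[OF cpoly_mono[OF N1]]) simp
  have c2: "cpoly (Suc ?N) (\<lambda>m. [:kd q (-1) * kd i 1 * b + (- (kd i 0 * (q * a + q / 2))) * of_int m, kd i 0:] * shiftp (of_int m * q) (snd v))"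
    by (rule cpoly_lin[OF cpoly_mono[OF N2]]) simp
  have "vpoly (Suc ?N) (\<lambda>m. omegaL q 1 a b m i v)"
    unfolding vpoly_def omegaL_def using c1 c2 by (simp add: algebra_simps)
  thus ?thesis by blast
qed

lemma vpoly_omegaG: "\<exists>N. vpoly N (\<lambda>m. omegaG q 1 a b m i v)"
proof -
  obtain N1 where N1: "cpoly N1 (\<lambda>m. shiftp (of_int m * q) (fst v))" using cpoly_shift by blast
  obtain N2 where N2: "cpoly N2 (\<lambda>m. shiftp (of_int m * q) (snd v))" using cpoly_shift by blast
  let ?N = "max N1 N2"
  have c1: "cpoly (Suc ?N) (\<lambda>m. smult q ([:2 * kd q (-1) * kd i 1 * b + (- (2 * kd i 0 * q * a)) * of_int m, kd i 0:] * shiftp (of_int m * q) (snd v)))"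
    by (rule cpoly_smult, rule cpoly_lin[OF cpoly_mono[OF N2]]) simp
  have c2: "cpoly (Suc ?N) (\<lambda>m. smult (kd i 0) (shiftp (of_int m * q) (fst v)))"
    by (rule cpoly_smult, rule cpoly_mono[OF N1]) simp
  have "vpoly (Suc ?N) (\<lambda>m. omegaG q 1 a b m i v)"
    unfolding vpoly_def omegaG_def using c1 c2 by (simp add: algebra_simps)
  thus ?thesis by blast
qed

lemma extend_op:
  assumes W: "graded_subspace W" and lam: "lam \<noteq> 0" and P: "vpoly N (\<lambda>m. Op 1 m)"
    and sc: "\<And>m. Op lam m = scale_vec (lam powi m) (Op 1 m)"
    and A: "infinite A" and PA: "\<And>m. m \<in> A \<Longrightarrow> Op lam m \<in> W"
  shows "Op lam m \<in> W"
proof -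
  have "Op 1 m \<in> W" for m
  proof (rule extend[OF W P A])
    fix m assume "m \<in> A"
    hence "scale_vec (inverse (lam powi m)) (Op lam m) \<in> W" using PA gs_scale[OF W] by blast
    thus "Op 1 m \<in> W" using scale_vec_cancel[of "lam powi m" "Op 1 m"] lam sc[of m] by simp
  qed
  thus ?thesis using sc[of m] gs_scale[OF W] by simp
qed

lemma inf_even: "infinite (range (\<lambda>k::int. 2 * k))"
proof
  assume "finite (range (\<lambda>k::int. 2 * k))"
  moreover have "inj_on (\<lambda>k::int. 2 * k) UNIV" by (auto simp: inj_on_def)
  ultimately have "finite (UNIV :: int set)" by (rule finite_imageD)
  thus False by simp
qed

lemma inf_odd: "infinite (range (\<lambda>k::int. 2 * k + 1))"
proof
  assume "finite (range (\<lambda>k::int. 2 * k + 1))"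
  moreover have "inj_on (\<lambda>k::int. 2 * k + 1) UNIV" by (auto simp: inj_on_def)
  ultimately have "finite (UNIV :: int set)" by (rule finite_imageD)
  thus False by simp
qed

theorem proposition4p2:
  fixes q lam a b :: complex
  assumes "q \<noteq> 0" and "lam \<noteq> 0"
  shows "simple_for (L_ops q lam a b) \<longleftrightarrow> simple_for (R_ops q lam a b)"
proof
  assume S: "simple_for (L_ops q lam a b)"
  show "simple_for (R_ops q lam a b)" unfolding simple_for_def
  proof (intro allI impI)
    fix W assume H: "graded_subspace W \<and> (\<forall>T\<in>R_ops q lam a b. T ` W \<subseteq> W)"
    hence W: "graded_subspace W" by blast
    have "\<forall>T\<in>L_ops q lam a b. T ` W \<subseteq> W"
    proof
      fix T assume "T \<in> L_ops q lam a b"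
      then consider m i where "T = scale_vec (1/2) \<circ> omegaL q lam a b (2 * m) i"
        | k j where "T = scale_vec (1 / complex_of_real (sqrt 2)) \<circ> omegaG q lam a b (2 * k + 1) j"
        unfolding L_ops_def by blast
      then show "T ` W \<subseteq> W"
      proof cases
        case 1
        have "omegaL q lam a b (2 * m) i \<in> R_ops q lam a b" unfolding R_ops_def by blast
        show ?thesis
        proof
          fix u assume "u \<in> T ` W"
          then obtain w where "w \<in> W" "u = T w" by blast
          moreover have "omegaL q lam a b (2 * m) i w \<in> W"
            using H \<open>w \<in> W\<close> \<open>omegaL q lam a b (2 * m) i \<in> R_ops q lam a b\<close> by blast
          ultimately show "u \<in> W" using 1 gs_scale[OF W] by simp
        qed
      next
        case 2
        have "omegaG q lam a b (2 * k + 1) j \<in> R_ops q lam a b" unfolding R_ops_def by blast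
        show ?thesis
        proof
          fix u assume "u \<in> T ` W"
          then obtain w where "w \<in> W" "u = T w" by blast
          moreover have "omegaG q lam a b (2 * k + 1) j w \<in> W"
            using H \<open>w \<in> W\<close> \<open>omegaG q lam a b (2 * k + 1) j \<in> R_ops q lam a b\<close> by blast
          ultimately show "u \<in> W" using 2 gs_scale[OF W] by simp
        qed
      qed
    qed
    with S W show "W = {(0, 0)} \<or> W = UNIV" unfolding simple_for_def by blast
  qed
next
  assume S: "simple_for (R_ops q lam a b)"
  show "simple_for (L_ops q lam a b)" unfolding simple_for_def
  proof (intro allI impI)
    fix W assume H: "graded_subspace W \<and> (\<forall>T\<in>L_ops q lam a b. T ` W \<subseteq> W)"
    hence W: "graded_subspace W" by blast
    have Lin: "omegaL q lam a b m i v \<in> W" if v: "v \<in> W" for m i v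
    proof -
      obtain N where N: "vpoly N (\<lambda>m. omegaL q 1 a b m i v)" using vpoly_omegaL by blast
      show ?thesis
      proof (rule extend_op[where Op = "\<lambda>l m. omegaL q l a b m i v", OF W assms(2) N omegaL_scale inf_even])
        fix m assume "m \<in> range (\<lambda>k::int. 2 * k)"
        then obtain k where k: "m = 2 * k" by blast
        have "scale_vec (1/2) \<circ> omegaL q lam a b (2 * k) i \<in> L_ops q lam a b" unfolding L_ops_def by blast
        hence "scale_vec (1/2) (omegaL q lam a b (2 * k) i v) \<in> W" using H v by (metis (no_types, lifting) comp_apply image_subset_iff)
        hence "scale_vec (inverse (1/2)) (scale_vec (1/2) (omegaL q lam a b (2 * k) i v)) \<in> W"
          by (rule gs_scale[OF W])
        thus "omegaL q lam a b m i v \<in> W" using k scale_vec_cancel[of "1/2::complex"] by simp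
      qed
    qed
    have Gin: "omegaG q lam a b m i v \<in> W" if v: "v \<in> W" for m i v
    proof -
      obtain N where N: "vpoly N (\<lambda>m. omegaG q 1 a b m i v)" using vpoly_omegaG by blast
      show ?thesis
      proof (rule extend_op[where Op = "\<lambda>l m. omegaG q l a b m i v", OF W assms(2) N omegaG_scale inf_odd])
        fix m assume "m \<in> range (\<lambda>k::int. 2 * k + 1)"
        then obtain k where k: "m = 2 * k + 1" by blast
        have "scale_vec (1 / complex_of_real (sqrt 2)) \<circ> omegaG q lam a b (2 * k + 1) i \<in> L_ops q lam a b"
          unfolding L_ops_def by blast
        hence "scale_vec (1 / complex_of_real (sqrt 2)) (omegaG q lam a b (2 * k + 1) i v) \<in> W" using H v by (metis (no_types, lifting) comp_apply image_subset_iff)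
        hence "scale_vec (inverse (1 / complex_of_real (sqrt 2))) (scale_vec (1 / complex_of_real (sqrt 2)) (omegaG q lam a b (2 * k + 1) i v)) \<in> W"
          by (rule gs_scale[OF W])
        moreover have "(1 / complex_of_real (sqrt 2)) \<noteq> 0" by simp
        ultimately show "omegaG q lam a b m i v \<in> W" using k scale_vec_cancel by metis
      qed
    qed
    have "\<forall>T\<in>R_ops q lam a b. T ` W \<subseteq> W"
      unfolding R_ops_def using Lin Gin by blast
    with S W show "W = {(0, 0)} \<or> W = UNIV" unfolding simple_for_def by blast
  qed
qed

end
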